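(* Consider optimal control problem OCP-1 (described in the context), let $u_*^1$ be an optimal control with optimal trajectory $(s_*^1,e_*^1,i_*^1,j_*^1)$ and let $\psi_*=(\psi_1^*,\dots,\psi_4^* )$ be the corresponding adjoint function from the Pontryagin maximum principle. Then at every $t\in[0,T]$ at which $u_*^1(t)$ maximizes the Hamiltonian $H(s_*^1(t),e_*^1(t),i_*^1(t),j_*^1(t),\psi_*(t),u)$ over $u\in[0,u_{\max}]$: if $A_*(t)>0$, then $u_*^1(t)=u_{\max}$ when $\lambda_*^1(t)>u_{\max}$, $u_*^1(t)=\lambda_*^1(t)$ when $0\le\lambda_*^1(t)\le u_{\max}$, and $u_*^1(t)=0$ when $\lambda_*^1(t)\le 0$; and if $A_*(t)\le0$, then $u_*^1(t)=0$.
   Context: Parameters: $\beta_1,\beta_2,\gamma,\rho_1,\rho_2>0$; $\sigma_1,\sigma_2>0$ with $\sigma_1+\sigma_2=1$; $0\le u_{\max}<1$; weights $\alpha_1,\alpha_2\ge0$, $\alpha_3>0$; horizon $T>0$; initial values $s_0,e_0,i_0,j_0>0$ with $s_0+e_0+i_0+j_0\le 1$. The admissible controls are all Lebesgue measurable $u:[0,T]\to[0,u_{\max}]$. The state system is $s'=-s(\beta_1(1-u)^2i+\beta_2(1-u)j)$, $e'=s(\beta_1(1-u)^2i+\beta_2(1-u)j)-\gamma e$, $i'=\sigma_1\gamma e-\rho_1 i$, $j'=\sigma_2\gamma e-\rho_2 j$, with $s(0)=s_0,e(0)=e_0,i(0)=i_0,j(0)=j_0$. OCP-1 is the problem of minimizing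 $Q(u)=\alpha_1(e(T)+i(T)+j(T))+\alpha_2\int_0^T(e+i+j)\,dt+0.5\alpha_3\int_0^Tu^2\,dt$ over admissible controls. Its Hamiltonian is $H(s,e,i,j,\psi_1,\dots,\psi_4,u)=-s(\beta_1(1-u)^2i+\beta_2(1-u)j)(\psi_1-\psi_2)-\gamma e(\psi_2-\sigma_1\psi_3-\sigma_2\psi_4)-\rho_1 i\psi_3-\rho_2 j\psi_4-\alpha_2(e+i+j)-0.5\alpha_3u^2$. The adjoint function $\psi_*$ is a nontrivial solution of $\psi_1'=(\beta_1(1-u_*^1)^2i_*^1+\beta_2(1-u_*^1)j_*^1)(\psi_1-\psi_2)$, $\psi_2'=\gamma(\psi_2-\sigma_1\psi_3-\sigma_2\psi_4)+\alpha_2$, $\psi_3'=\beta_1(1-u_*^1)^2s_*^1(\psi_1-\psi_2)+\rho_1\psi_3+\alpha_2$, $\psi_4'=\beta_2(1-u_*^1)s_*^1(\psi_1-\psi_2)+\rho_2\psi_4+\alpha_2$, with $\psi_1(T)=0$, $\psi_2(T)=\psi_3(T)=\psi_4(T)=-\alpha_1$, and $u_*^1(t)$ maximizes the Hamiltonian along the optimal trajectory for almost all $t\in[0,T]$. Define $A_*(t)=\beta_1s_*^1(t)i_*^1(t)(\psi_1^*(t)-\psi_2^*(t))+0.5\alpha_3$, $B_*(t)=s_*^1(t)(2\beta_1i_*^1(t)+\beta_2j_*^1(t))(\psi_1^*(t)-\psi_2^*(t))$, and, whenever $A_*(t)\neq0$, the indicator function $\lambda_*^1(t)=0.5B_*(t)/A_*(t)$.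 *)

theory Defs
  imports "HOL-Analysis.Analysis"
begin

text \<open>Model OCP-1. Parameters: b1 b2 (beta_1, beta_2), g (gamma), r1 r2 (rho_1, rho_2),
  c1 c2 (sigma_1, sigma_2), umax, a1 a2 a3 (alpha weights), T horizon.\<close>

definition admissible :: "real \<Rightarrow> real \<Rightarrow> (real \<Rightarrow> real) \<Rightarrow> bool" where
  "admissible umax T u \<longleftrightarrow>
     set_borel_measurable lebesgue {0..T} u \<and> (\<forall>t\<in>{0..T}. 0 \<le> u t \<and> u t \<le> umax)"

definition infl :: "real \<Rightarrow> real \<Rightarrow> real \<Rightarrow> real \<Rightarrow> real \<Rightarrow> real \<Rightarrow> real" where
  "infl b1 b2 u s i j = s * (b1 * (1 - u)^2 * i + b2 * (1 - u) * j)"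

text \<open>Solutions of the state system in the Caratheodory sense (absolutely continuous
  functions satisfying the integrated equations), on [0,T].\<close>
definition is_trajectory ::
  "real \<Rightarrow> real \<Rightarrow> real \<Rightarrow> real \<Rightarrow> real \<Rightarrow> real \<Rightarrow> real \<Rightarrow> real \<Rightarrow>
   real \<Rightarrow> real \<Rightarrow> real \<Rightarrow> real \<Rightarrow> (real \<Rightarrow> real) \<Rightarrow>
   (real \<Rightarrow> real) \<Rightarrow> (real \<Rightarrow> real) \<Rightarrow> (real \<Rightarrow> real) \<Rightarrow> (real \<Rightarrow> real) \<Rightarrow> bool" where
  "is_trajectory b1 b2 g r1 r2 c1 c2 T s0 e0 i0 j0 u s e i j \<longleftrightarrow>
     continuous_on {0..T} s \<and> continuous_on {0..T} e \<and>
     continuous_on {0..T} i \<and> continuous_on {0..T} j \<and>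
     (\<forall>t\<in>{0..T}.
        s t = s0 + integral {0..t} (\<lambda>\<tau>. - infl b1 b2 (u \<tau>) (s \<tau>) (i \<tau>) (j \<tau>)) \<and>
        e t = e0 + integral {0..t} (\<lambda>\<tau>. infl b1 b2 (u \<tau>) (s \<tau>) (i \<tau>) (j \<tau>) - g * e \<tau>) \<and>
        i t = i0 + integral {0..t} (\<lambda>\<tau>. c1 * g * e \<tau> - r1 * i \<tau>) \<and>
        j t = j0 + integral {0..t} (\<lambda>\<tau>. c2 * g * e \<tau> - r2 * j \<tau>))"

definition cost ::
  "real \<Rightarrow> real \<Rightarrow> real \<Rightarrow> real \<Rightarrow> (real \<Rightarrow> real) \<Rightarrow>
   (real \<Rightarrow> real) \<Rightarrow> (real \<Rightarrow> real) \<Rightarrow> (real \<Rightarrow> real) \<Rightarrow> real" where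
  "cost a1 a2 a3 T u e i j =
     a1 * (e T + i T + j T) + a2 * integral {0..T} (\<lambda>t. e t + i t + j t)
     + 0.5 * a3 * integral {0..T} (\<lambda>t. (u t)^2)"

definition Ham ::
  "real \<Rightarrow> real \<Rightarrow> real \<Rightarrow> real \<Rightarrow> real \<Rightarrow> real \<Rightarrow> real \<Rightarrow> real \<Rightarrow> real \<Rightarrow>
   real \<Rightarrow> real \<Rightarrow> real \<Rightarrow> real \<Rightarrow> real \<Rightarrow> real \<Rightarrow> real \<Rightarrow> real \<Rightarrow> real \<Rightarrow> real" where
  "Ham b1 b2 g r1 r2 c1 c2 a2 a3 s e i j p1 p2 p3 p4 u =
     - infl b1 b2 u s i j * (p1 - p2) - g * e * (p2 - c1 * p3 - c2 * p4)
     - r1 * i * p3 - r2 * j * p4 - a2 * (e + i + j) - 0.5 * a3 * u^2"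

definition is_adjoint ::
  "real \<Rightarrow> real \<Rightarrow> real \<Rightarrow> real \<Rightarrow> real \<Rightarrow> real \<Rightarrow> real \<Rightarrow> real \<Rightarrow> real \<Rightarrow> real \<Rightarrow>
   (real \<Rightarrow> real) \<Rightarrow> (real \<Rightarrow> real) \<Rightarrow> (real \<Rightarrow> real) \<Rightarrow> (real \<Rightarrow> real) \<Rightarrow>
   (real \<Rightarrow> real) \<Rightarrow> (real \<Rightarrow> real) \<Rightarrow> (real \<Rightarrow> real) \<Rightarrow> (real \<Rightarrow> real) \<Rightarrow> bool" where
  "is_adjoint b1 b2 g r1 r2 c1 c2 a1 a2 T u s i j p1 p2 p3 p4 \<longleftrightarrow>
     continuous_on {0..T} p1 \<and> continuous_on {0..T} p2 \<and>
     continuous_on {0..T} p3 \<and> continuous_on {0..T} p4 \<and>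
     p1 T = 0 \<and> p2 T = - a1 \<and> p3 T = - a1 \<and> p4 T = - a1 \<and>
     (\<forall>t\<in>{0..T}.
        p1 t = p1 T - integral {t..T} (\<lambda>\<tau>. (b1 * (1 - u \<tau>)^2 * i \<tau> + b2 * (1 - u \<tau>) * j \<tau>)
                                             * (p1 \<tau> - p2 \<tau>)) \<and>
        p2 t = p2 T - integral {t..T} (\<lambda>\<tau>. g * (p2 \<tau> - c1 * p3 \<tau> - c2 * p4 \<tau>) + a2) \<and>
        p3 t = p3 T - integral {t..T} (\<lambda>\<tau>. b1 * (1 - u \<tau>)^2 * s \<tau> * (p1 \<tau> - p2 \<tau>)
                                             + r1 * p3 \<tau> + a2) \<and>
        p4 t = p4 T - integral {t..T} (\<lambda>\<tau>. b2 * (1 - u \<tau>) * s \<tau> * (p1 \<tau> - p2 \<tau>)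
                                             + r2 * p4 \<tau> + a2))"

end

theory Submission
  imports Defs
begin

lemma gronwall_zero:
  fixes x :: "real \<Rightarrow> real"
  assumes ab: "a \<le> b" and cx: "continuous_on {a..b} x" and nn: "\<forall>t\<in>{a..b}. 0 \<le> x t"
    and K: "K \<ge> 0" and le: "\<forall>t\<in>{a..b}. x t \<le> K * integral {t..b} x"
  shows "x a = 0"
proof -
  have xi: "x integrable_on {a..b}" using cx integrable_continuous_interval by blast
  define G where "G t = exp (K * t) * integral {t..b} x" for t
  have F_eq: "integral {t..b} x = integral {a..b} x - integral {a..t} x" if "t \<in> {a..b}" for t
    using Henstock_Kurzweil_Integration.integral_combine[of a t b x] xi that by auto
  have cG: "continuous_on {a..b} G"
    unfolding G_def by (intro continuous_intros indefinite_integral_continuous_1' xi)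
  have "G a \<le> G b"
  proof (rule DERIV_nonneg_imp_increasing_open[OF ab _ cG])
    fix t assume t: "a < t" "t < b"
    have tin: "t \<in> interior {a..b}" using t by auto
    have d1: "((\<lambda>t. integral {a..t} x) has_real_derivative x t) (at t)"
      proof -
      have "((\<lambda>t. integral {a..t} x) has_real_derivative x t) (at t within {a..b})"
        using integral_has_real_derivative[OF cx, of t] t by auto
      then show ?thesis using at_within_interior[OF tin] by metis
    qed
    have d2: "((\<lambda>t. exp (K * t) * (integral {a..b} x - integral {a..t} x)) has_real_derivative
        (exp (K * t) * K) * (integral {a..b} x - integral {a..t} x) + exp (K * t) * (0 - x t)) (at t)"
    proof -
      have e1: "((\<lambda>t. exp (K * t)) has_real_derivative exp (K * t) * K) (at t)"
        by (auto intro!: derivative_eq_intros)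
      have e2: "((\<lambda>t. integral {a..b} x - integral {a..t} x) has_real_derivative (0 - x t)) (at t)"
        by (rule DERIV_diff[OF DERIV_const d1])
      show ?thesis using DERIV_mult[OF e1 e2] by (simp add: algebra_simps)
    qed
    have ev: "\<forall>\<^sub>F s in nhds t. exp (K * s) * (integral {a..b} x - integral {a..s} x) = G s"
    proof -
      have "eventually (\<lambda>s. s \<in> {a<..<b}) (nhds t)" using t by (intro eventually_nhds_in_open) auto
      then show ?thesis proof eventually_elim
        case (elim s) then show ?case using F_eq[of s] by (simp add: G_def)
      qed
    qed
    have d3: "(G has_real_derivative (exp (K * t) * K) * (integral {a..b} x - integral {a..t} x) + exp (K * t) * (0 - x t)) (at t)"
      using DERIV_cong_ev[OF refl ev refl] d2 by blast
    have "x t \<le> K * (integral {a..b} x - integral {a..t} x)" proof -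
      have "x t \<le> K * integral {t..b} x" using le t by auto
      then show ?thesis using F_eq[of t] t by simp
    qed
    then have "0 \<le> (exp (K * t) * K) * (integral {a..b} x - integral {a..t} x) + exp (K * t) * (0 - x t)"
    proof -
      have "0 \<le> exp (K * t) * (K * (integral {a..b} x - integral {a..t} x) - x t)"
        using \<open>x t \<le> _\<close> by (intro mult_nonneg_nonneg) auto
      then show ?thesis by (simp add: algebra_simps)
    qed
    then show "\<exists>y. DERIV G t :> y \<and> 0 \<le> y" using d3 by blast
  qed
  moreover have "G b = 0" by (simp add: G_def)
  ultimately have "exp (K * a) * integral {a..b} x \<le> 0" by (simp add: G_def)
  then have "integral {a..b} x \<le> 0" by (simp add: mult_le_0_iff)
  moreover have "integral {a..b} x \<ge> 0" using nn by (intro integral_nonneg xi) auto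
  ultimately have "integral {a..b} x = 0" by linarith
  moreover have "x a \<le> K * integral {a..b} x" using le ab by auto
  moreover have "0 \<le> x a" using nn ab by auto
  ultimately show ?thesis by simp
qed

lemma cont_bound:
  fixes f :: "real \<Rightarrow> real"
  assumes "continuous_on {a..b} f"
  shows "\<exists>M>0. \<forall>t\<in>{a..b}. \<bar>f t\<bar> \<le> M"
proof -
  have "bounded (f ` {a..b})"
    by (intro compact_imp_bounded compact_continuous_image assms compact_Icc)
  then obtain M where "M > 0" "\<forall>x\<in>f ` {a..b}. norm x \<le> M" unfolding bounded_pos by blast
  then show ?thesis by auto
qed

lemma int_diff:
  fixes x f :: "real \<Rightarrow> real"
  assumes fi: "f integrable_on {0..T}" and ab: "0 \<le> a" "a \<le> b" "b \<le> T"
    and eq: "\<forall>t\<in>{0..T}. x t = x0 + integral {0..t} f"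
  shows "x b - x a = integral {a..b} f"
proof -
  have fb: "f integrable_on {0..b}" using fi ab by (intro integrable_subinterval_real[OF fi]) auto
  have "integral {0..a} f + integral {a..b} f = integral {0..b} f"
    using Henstock_Kurzweil_Integration.integral_combine[of 0 a b f] fb ab by auto
  moreover have "x b = x0 + integral {0..b} f" "x a = x0 + integral {0..a} f" using eq ab by auto
  ultimately show ?thesis by simp
qed

lemma k_bound:
  fixes b1 b2 v I J :: real
  assumes "0 \<le> v" "v \<le> 1" "b1 \<ge> 0" "b2 \<ge> 0"
  shows "\<bar>b1 * (1 - v)^2 * I + b2 * (1 - v) * J\<bar> \<le> b1 * \<bar>I\<bar> + b2 * \<bar>J\<bar>"
proof -
  have h1: "(1 - v)^2 \<le> 1" using assms by (simp add: power_le_one)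
  have h2: "0 \<le> (1 - v)^2" by simp
  have "\<bar>b1 * (1 - v)^2 * I\<bar> = b1 * (1 - v)^2 * \<bar>I\<bar>" using assms by (simp add: abs_mult)
  also have "\<dots> \<le> b1 * 1 * \<bar>I\<bar>" using h1 assms by (intro mult_right_mono mult_left_mono) auto
  finally have a1: "\<bar>b1 * (1 - v)^2 * I\<bar> \<le> b1 * \<bar>I\<bar>" by simp
  have "\<bar>b2 * (1 - v) * J\<bar> = b2 * (1 - v) * \<bar>J\<bar>" using assms by (simp add: abs_mult)
  also have "\<dots> \<le> b2 * 1 * \<bar>J\<bar>" using assms by (intro mult_right_mono mult_left_mono) auto
  finally have a2: "\<bar>b2 * (1 - v) * J\<bar> \<le> b2 * \<bar>J\<bar>" by simp
  show ?thesis using a1 a2 abs_triangle_ineq[of "b1 * (1 - v)^2 * I" "b2 * (1 - v) * J"] by linarith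
qed

lemma infl_nonneg:
  assumes "0 \<le> v" "v \<le> 1" "b1 \<ge> 0" "b2 \<ge> 0" "S \<ge> 0" "I \<ge> 0" "J \<ge> 0"
  shows "infl b1 b2 v S I J \<ge> 0"
  using assms unfolding infl_def by (intro mult_nonneg_nonneg add_nonneg_nonneg) auto

lemma Ham_expand:
  "Ham b1 b2 g r1 r2 c1 c2 a2 a3 s e i j p1 p2 p3 p4 v =
   Ham b1 b2 g r1 r2 c1 c2 a2 a3 s e i j p1 p2 p3 p4 0
   + (s * (2 * b1 * i + b2 * j) * (p1 - p2)) * v - (b1 * s * i * (p1 - p2) + 0.5 * a3) * v^2"
  by (simp add: Ham_def infl_def power2_eq_square algebra_simps)

lemma zero_from_eq:
  fixes x f :: "real \<Rightarrow> real"
  assumes tb: "0 \<le> tb" "tb \<le> T" and fi: "f integrable_on {0..T}" and cx: "continuous_on {0..T} x"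
    and eq: "\<forall>t\<in>{0..T}. x t = x0 + integral {0..t} f" and z: "x tb = 0"
    and nn: "\<forall>t\<in>{0..tb}. 0 \<le> x t" and fb: "\<forall>t\<in>{0..tb}. - (c * x t) \<le> f t" and c: "c \<ge> 0"
  shows "x0 = 0"
proof -
  have cx': "continuous_on {0..tb} x" using tb by (intro continuous_on_subset[OF cx]) auto
  have "x 0 = 0"
  proof (rule gronwall_zero[OF tb(1) cx' nn c], intro ballI)
    fix t assume t: "t \<in> {0..tb}"
    have d: "x tb - x t = integral {t..tb} f" using int_diff[OF fi _ _ _ eq] t tb by auto
    have fit: "f integrable_on {t..tb}" using t tb by (intro integrable_subinterval_real[OF fi]) auto
    have xit: "(\<lambda>\<tau>. - (c * x \<tau>)) integrable_on {t..tb}"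
      using t tb by (intro integrable_continuous_interval continuous_intros continuous_on_subset[OF cx]) auto
    have "integral {t..tb} (\<lambda>\<tau>. - (c * x \<tau>)) \<le> integral {t..tb} f"
      using t by (intro integral_le[OF xit fit]) (use fb in auto)
    moreover have "integral {t..tb} (\<lambda>\<tau>. - (c * x \<tau>)) = - (c * integral {t..tb} x)"
      by simp
    ultimately show "x t \<le> c * integral {t..tb} x" using d z by linarith
  qed
  moreover have "x 0 = x0" using eq tb by auto
  ultimately show ?thesis by simp
qed

lemma final_alg:
  fixes A B w umax b1 b2 a3 S I J D :: real
  assumes AB: "A = b1 * S * I * D + 0.5 * a3" "B = S * (2 * b1 * I + b2 * J) * D"
    and w: "0 \<le> w" "w \<le> umax" and um: "umax < 1" and pos: "I > 0" "J > 0" "b1 > 0" "b2 > 0" "a3 > 0"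
    and mx: "\<forall>v\<in>{0..umax}. B * v - A * v^2 \<le> B * w - A * w^2"
  shows "let lam = 0.5 * B / A
         in (A > 0 \<longrightarrow>
               (lam > umax \<longrightarrow> w = umax) \<and>
               (0 \<le> lam \<and> lam \<le> umax \<longrightarrow> w = lam) \<and>
               (lam \<le> 0 \<longrightarrow> w = 0)) \<and>
            (A \<le> 0 \<longrightarrow> w = 0)"
proof -
  define lam where "lam = 0.5 * B / A"
  have P1: "A > 0 \<longrightarrow>
               (lam > umax \<longrightarrow> w = umax) \<and>
               (0 \<le> lam \<and> lam \<le> umax \<longrightarrow> w = lam) \<and>
               (lam \<le> 0 \<longrightarrow> w = 0)"
  proof
    assume A: "A > 0"
    have id: "B * v - A * v^2 = A * lam^2 - A * (v - lam)^2" for v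
      using A unfolding lam_def by (simp add: field_simps power2_eq_square)
    have key: "(w - lam)^2 \<le> (v - lam)^2" if "v \<in> {0..umax}" for v
    proof -
      have "B * v - A * v^2 \<le> B * w - A * w^2" using mx that by blast
      then have "A * (w - lam)^2 \<le> A * (v - lam)^2" using id[of v] id[of w] by linarith
      then show ?thesis using A by simp
    qed
    show "(lam > umax \<longrightarrow> w = umax) \<and> (0 \<le> lam \<and> lam \<le> umax \<longrightarrow> w = lam) \<and> (lam \<le> 0 \<longrightarrow> w = 0)"
    proof (intro conjI impI)
      assume l: "lam > umax"
      have "(w - lam)^2 \<le> (umax - lam)^2" using key[of umax] w by auto
      then have "\<bar>w - lam\<bar> \<le> \<bar>umax - lam\<bar>" by (simp add: abs_le_square_iff)
      then show "w = umax" using l w by linarith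
    next
      assume l: "0 \<le> lam \<and> lam \<le> umax"
      have "(w - lam)^2 \<le> (lam - lam)^2" using key[of lam] l by auto
      then show "w = lam" by simp
    next
      assume l: "lam \<le> 0"
      have "(w - lam)^2 \<le> (0 - lam)^2" using key[of 0] w by auto
      then have "\<bar>w - lam\<bar> \<le> \<bar>0 - lam\<bar>" by (simp add: abs_le_square_iff)
      then show "w = 0" using l w by linarith
    qed
  qed
  have P2: "A \<le> 0 \<longrightarrow> w = 0"
  proof
    assume A: "A \<le> 0"
    show "w = 0"
    proof (rule ccontr)
      assume "w \<noteq> 0"
      then have wp: "w > 0" using w by simp
      have "B * 0 - A * 0^2 \<le> B * w - A * w^2" using mx w um by (meson atLeastAtMost_iff order_refl order_trans)
      then have "0 \<le> w * (B - A * w)" by (simp add: algebra_simps power2_eq_square)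
      then have c1: "0 \<le> B - A * w" using wp by (simp add: zero_le_mult_iff)
      have "(b1 * I) * (S * D) \<le> - 0.5 * a3" using A AB by (simp add: algebra_simps)
      then have "(b1 * I) * (S * D) < 0" using pos by linarith
      then have SD: "S * D < 0" using pos by (simp add: mult_less_0_iff)
      have q: "b1 * I * (2 - w) + b2 * J > 0" using pos w um by (intro add_pos_pos mult_pos_pos) auto
      have "B - A * w = (S * D) * (b1 * I * (2 - w) + b2 * J) - 0.5 * a3 * w"
        using AB by (simp add: algebra_simps)
      moreover have "(S * D) * (b1 * I * (2 - w) + b2 * J) < 0" using SD q by (simp add: mult_neg_pos)
      moreover have "0.5 * a3 * w \<ge> 0" using pos wp by simp
      ultimately show False using c1 by linarith
    qed
  qed
  show ?thesis using P1 P2 unfolding lam_def Let_def by blast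
qed

theorem corollary1:
  fixes b1 b2 g r1 r2 c1 c2 umax a1 a2 a3 T s0 e0 i0 j0 t :: real
    and u s e i j p1 p2 p3 p4 :: "real \<Rightarrow> real"
  assumes par: "b1 > 0" "b2 > 0" "g > 0" "r1 > 0" "r2 > 0"
    and sig: "c1 > 0" "c2 > 0" "c1 + c2 = 1"
    and um: "0 \<le> umax" "umax < 1"
    and wts: "a1 \<ge> 0" "a2 \<ge> 0" "a3 > 0"
    and hor: "T > 0"
    and init: "s0 > 0" "e0 > 0" "i0 > 0" "j0 > 0" "s0 + e0 + i0 + j0 \<le> 1"
    and adm: "admissible umax T u"
    and traj: "is_trajectory b1 b2 g r1 r2 c1 c2 T s0 e0 i0 j0 u s e i j"
    and opt: "\<And>v sv ev iv jv. admissible umax T v \<Longrightarrow>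
                 is_trajectory b1 b2 g r1 r2 c1 c2 T s0 e0 i0 j0 v sv ev iv jv \<Longrightarrow>
                 cost a1 a2 a3 T u e i j \<le> cost a1 a2 a3 T v ev iv jv"
    and adj: "is_adjoint b1 b2 g r1 r2 c1 c2 a1 a2 T u s i j p1 p2 p3 p4"
    and nontriv: "\<exists>\<tau>\<in>{0..T}. p1 \<tau> \<noteq> 0 \<or> p2 \<tau> \<noteq> 0 \<or> p3 \<tau> \<noteq> 0 \<or> p4 \<tau> \<noteq> 0"
    and maxae: "AE \<tau> in lebesgue. \<tau> \<in> {0..T} \<longrightarrow>
                 (\<forall>v\<in>{0..umax}.
                    Ham b1 b2 g r1 r2 c1 c2 a2 a3 (s \<tau>) (e \<tau>) (i \<tau>) (j \<tau>) (p1 \<tau>) (p2 \<tau>) (p3 \<tau>) (p4 \<tau>) v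
                    \<le> Ham b1 b2 g r1 r2 c1 c2 a2 a3 (s \<tau>) (e \<tau>) (i \<tau>) (j \<tau>) (p1 \<tau>) (p2 \<tau>) (p3 \<tau>) (p4 \<tau>) (u \<tau>))"
    and tT: "t \<in> {0..T}"
    and maxt: "\<forall>v\<in>{0..umax}.
                 Ham b1 b2 g r1 r2 c1 c2 a2 a3 (s t) (e t) (i t) (j t) (p1 t) (p2 t) (p3 t) (p4 t) v
                 \<le> Ham b1 b2 g r1 r2 c1 c2 a2 a3 (s t) (e t) (i t) (j t) (p1 t) (p2 t) (p3 t) (p4 t) (u t)"
  shows "let A = b1 * s t * i t * (p1 t - p2 t) + 0.5 * a3;
             B = s t * (2 * b1 * i t + b2 * j t) * (p1 t - p2 t);
             lam = 0.5 * B / A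
         in (A > 0 \<longrightarrow>
               (lam > umax \<longrightarrow> u t = umax) \<and>
               (0 \<le> lam \<and> lam \<le> umax \<longrightarrow> u t = lam) \<and>
               (lam \<le> 0 \<longrightarrow> u t = 0)) \<and>
            (A \<le> 0 \<longrightarrow> u t = 0)"
proof -
  note trajd = traj[unfolded is_trajectory_def]
  have cs: "continuous_on {0..T} s" and ce: "continuous_on {0..T} e"
    and ci: "continuous_on {0..T} i" and cj: "continuous_on {0..T} j" using trajd by auto
  have eqs: "\<forall>t\<in>{0..T}. s t = s0 + integral {0..t} (\<lambda>\<tau>. - infl b1 b2 (u \<tau>) (s \<tau>) (i \<tau>) (j \<tau>))"
    and eqe: "\<forall>t\<in>{0..T}. e t = e0 + integral {0..t} (\<lambda>\<tau>. infl b1 b2 (u \<tau>) (s \<tau>) (i \<tau>) (j \<tau>) - g * e \<tau>)"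
    and eqi: "\<forall>t\<in>{0..T}. i t = i0 + integral {0..t} (\<lambda>\<tau>. c1 * g * e \<tau> - r1 * i \<tau>)"
    and eqj: "\<forall>t\<in>{0..T}. j t = j0 + integral {0..t} (\<lambda>\<tau>. c2 * g * e \<tau> - r2 * j \<tau>)"
    using trajd by auto
  have ub: "\<forall>t\<in>{0..T}. 0 \<le> u t \<and> u t \<le> umax" using adm unfolding admissible_def by auto
  have umeas: "u \<in> borel_measurable (lebesgue_on {0..T})"
  proof -
    have "(\<lambda>x. indicator {0..T} x *\<^sub>R u x) \<in> borel_measurable lebesgue"
      using adm unfolding admissible_def set_borel_measurable_def by auto
    moreover have "(\<lambda>x. indicator {0..T} x *\<^sub>R u x) = (\<lambda>x. if x \<in> {0..T} then u x else 0)"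
      by (auto simp: indicator_def)
    ultimately show ?thesis using borel_measurable_if[of "{0..T}" u] by auto
  qed
  have sm: "s \<in> borel_measurable (lebesgue_on {0..T})"
    by (rule continuous_imp_measurable_on_sets_lebesgue[OF cs]) auto
  have im: "i \<in> borel_measurable (lebesgue_on {0..T})"
    by (rule continuous_imp_measurable_on_sets_lebesgue[OF ci]) auto
  have jm: "j \<in> borel_measurable (lebesgue_on {0..T})"
    by (rule continuous_imp_measurable_on_sets_lebesgue[OF cj]) auto
  obtain Ms where Ms: "Ms > 0" "\<forall>t\<in>{0..T}. \<bar>s t\<bar> \<le> Ms" using cont_bound[OF cs] by blast
  obtain Mi where Mi: "Mi > 0" "\<forall>t\<in>{0..T}. \<bar>i t\<bar> \<le> Mi" using cont_bound[OF ci] by blast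
  obtain Mj where Mj: "Mj > 0" "\<forall>t\<in>{0..T}. \<bar>j t\<bar> \<le> Mj" using cont_bound[OF cj] by blast
  define K where "K = b1 * Mi + b2 * Mj"
  have K0: "K \<ge> 0" unfolding K_def using Mi Mj par by simp
  have kb: "\<bar>b1 * (1 - u \<tau>)^2 * i \<tau> + b2 * (1 - u \<tau>) * j \<tau>\<bar> \<le> K" if "\<tau> \<in> {0..T}" for \<tau>
  proof -
    have "\<bar>b1 * (1 - u \<tau>)^2 * i \<tau> + b2 * (1 - u \<tau>) * j \<tau>\<bar> \<le> b1 * \<bar>i \<tau>\<bar> + b2 * \<bar>j \<tau>\<bar>"
    proof -
      have "0 \<le> u \<tau> \<and> u \<tau> \<le> umax" using ub that by blast
      then show ?thesis using um par by (intro k_bound) auto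
    qed
    also have "\<dots> \<le> K" unfolding K_def using Mi Mj that par
      by (intro add_mono mult_left_mono) auto
    finally show ?thesis .
  qed
  have inflb: "\<bar>infl b1 b2 (u \<tau>) (s \<tau>) (i \<tau>) (j \<tau>)\<bar> \<le> K * \<bar>s \<tau>\<bar>" if "\<tau> \<in> {0..T}" for \<tau>
  proof -
    have "\<bar>infl b1 b2 (u \<tau>) (s \<tau>) (i \<tau>) (j \<tau>)\<bar> = \<bar>s \<tau>\<bar> * \<bar>b1 * (1 - u \<tau>)^2 * i \<tau> + b2 * (1 - u \<tau>) * j \<tau>\<bar>"
      by (simp add: infl_def abs_mult)
    also have "\<dots> \<le> \<bar>s \<tau>\<bar> * K" using kb[OF that] by (intro mult_left_mono) auto
    finally show ?thesis by (simp add: mult.commute)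
  qed
  have inflm: "(\<lambda>\<tau>. infl b1 b2 (u \<tau>) (s \<tau>) (i \<tau>) (j \<tau>)) \<in> borel_measurable (lebesgue_on {0..T})"
    unfolding infl_def using umeas sm im jm by measurable
  have infli: "(\<lambda>\<tau>. infl b1 b2 (u \<tau>) (s \<tau>) (i \<tau>) (j \<tau>)) integrable_on {0..T}"
  proof (rule measurable_bounded_by_integrable_imp_integrable_real[OF inflm, of "\<lambda>_. K * Ms"])
    show "(\<lambda>_. K * Ms) integrable_on {0..T}" by (intro integrable_continuous_interval continuous_intros)
    show "\<And>x. x \<in> {0..T} \<Longrightarrow> \<bar>infl b1 b2 (u x) (s x) (i x) (j x)\<bar> \<le> K * Ms"
      using inflb Ms K0 by (meson mult_left_mono order_trans)
    show "{0..T} \<in> sets lebesgue" by auto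
  qed
  have fsi: "(\<lambda>\<tau>. - infl b1 b2 (u \<tau>) (s \<tau>) (i \<tau>) (j \<tau>)) integrable_on {0..T}"
    using infli by (rule integrable_neg)
  have fei: "(\<lambda>\<tau>. infl b1 b2 (u \<tau>) (s \<tau>) (i \<tau>) (j \<tau>) - g * e \<tau>) integrable_on {0..T}"
    by (intro integrable_diff infli integrable_continuous_interval continuous_intros ce)
  have fii: "(\<lambda>\<tau>. c1 * g * e \<tau> - r1 * i \<tau>) integrable_on {0..T}"
    by (intro integrable_continuous_interval continuous_intros ce ci)
  have fji: "(\<lambda>\<tau>. c2 * g * e \<tau> - r2 * j \<tau>) integrable_on {0..T}"
    by (intro integrable_continuous_interval continuous_intros ce cj)
  have T0: "0 \<in> {0..T}" using hor by auto
  have s00: "s 0 = s0" using eqs T0 by auto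
  have e00: "e 0 = e0" using eqe T0 by auto
  have i00: "i 0 = i0" using eqi T0 by auto
  have j00: "j 0 = j0" using eqj T0 by auto
  have spos: "\<forall>t\<in>{0..T}. s t > 0"
  proof (rule ccontr)
    assume "\<not> ?thesis"
    then obtain t1 where t1: "t1 \<in> {0..T}" "s t1 \<le> 0" by auto
    have cs1: "continuous_on {0..t1} s" using t1 by (intro continuous_on_subset[OF cs]) auto
    obtain t2 where t2: "0 \<le> t2" "t2 \<le> t1" "s t2 = 0"
      using IVT2'[of s t1 0 0, OF t1(2) _ _ cs1] s00 init t1 by auto
    have cs2: "continuous_on {0..t2} (\<lambda>t. \<bar>s t\<bar>)" using t1 t2
      by (intro continuous_intros continuous_on_subset[OF cs]) auto
    have "\<bar>s 0\<bar> = 0"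
    proof (rule gronwall_zero[OF t2(1) cs2 _ K0], simp, intro ballI)
      fix t assume t: "t \<in> {0..t2}"
      have d: "s t2 - s t = integral {t..t2} (\<lambda>\<tau>. - infl b1 b2 (u \<tau>) (s \<tau>) (i \<tau>) (j \<tau>))"
      proof -
        have "0 \<le> t" "t \<le> t2" "t2 \<le> T" using t t2 t1 by auto
        then show ?thesis using int_diff[OF fsi _ _ _ eqs, of t t2] by blast
      qed
      have fit: "(\<lambda>\<tau>. - infl b1 b2 (u \<tau>) (s \<tau>) (i \<tau>) (j \<tau>)) integrable_on {t..t2}"
        using t t2 t1 by (intro integrable_subinterval_real[OF fsi]) auto
      have git: "(\<lambda>\<tau>. K * \<bar>s \<tau>\<bar>) integrable_on {t..t2}"
        using t t2 t1 by (intro integrable_continuous_interval continuous_intros continuous_on_subset[OF cs]) auto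
      have "norm (integral {t..t2} (\<lambda>\<tau>. - infl b1 b2 (u \<tau>) (s \<tau>) (i \<tau>) (j \<tau>)))
            \<le> integral {t..t2} (\<lambda>\<tau>. K * \<bar>s \<tau>\<bar>)"
        by (rule integral_norm_bound_integral[OF fit git]) (use inflb t t2 t1 in auto)
      also have "\<dots> = K * integral {t..t2} (\<lambda>\<tau>. \<bar>s \<tau>\<bar>)" by simp
      finally show "\<bar>s t\<bar> \<le> K * integral {t..t2} (\<lambda>\<tau>. \<bar>s \<tau>\<bar>)" using d t2 by simp
    qed
    then show False using s00 init by simp
  qed
  have eijpos: "\<forall>t\<in>{0..T}. e t > 0 \<and> i t > 0 \<and> j t > 0"
  proof (rule ccontr)
    define m where "m t = min (e t) (min (i t) (j t))" for t
    have cm: "continuous_on {0..T} m" unfolding m_def by (intro continuous_intros ce ci cj)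
    have m0: "m 0 > 0" using e00 i00 j00 init by (simp add: m_def)
    assume "\<not> ?thesis"
    then obtain t1 where t1: "t1 \<in> {0..T}" "m t1 \<le> 0" by (auto simp: m_def)
    define Z where "Z = {t \<in> {0..t1}. m t \<le> (\<lambda>_. 0) t}"
    have cm1: "continuous_on {0..t1} m" using t1 by (intro continuous_on_subset[OF cm]) auto
    have clZ: "closed Z" unfolding Z_def
      by (rule continuous_on_closed_Collect_le[OF cm1]) (auto intro: continuous_intros)
    have Zne: "Z \<noteq> {}" using t1 by (auto simp: Z_def)
    have Zbdd: "bdd_below Z" unfolding Z_def by (rule bdd_belowI[of _ 0]) auto
    define ts where "ts = Inf Z"
    have tsZ: "ts \<in> Z" unfolding ts_def using closed_contains_Inf[OF Zne Zbdd clZ] .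
    have ts: "0 \<le> ts" "ts \<le> t1" "m ts \<le> 0" using tsZ by (auto simp: Z_def)
    have below: "m t > 0" if "0 \<le> t" "t < ts" for t
    proof (rule ccontr)
      assume "\<not> m t > 0"
      then have "t \<in> Z" using that ts by (auto simp: Z_def)
      then have "ts \<le> t" unfolding ts_def using Zbdd by (rule cInf_lower)
      then show False using that by simp
    qed
    have cmts: "continuous_on {0..ts} m" using ts t1 by (intro continuous_on_subset[OF cm]) auto
    obtain t' where t': "0 \<le> t'" "t' \<le> ts" "m t' = 0"
      using IVT2'[of m ts 0 0, OF ts(3) _ ts(1) cmts] m0 by auto
    have "t' = ts"
    proof (rule ccontr)
      assume "t' \<noteq> ts" then have "t' < ts" using t' by simp
      then show False using below[of t'] t' by simp
    qed
    then have mts: "m ts = 0" using t' by simp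
    have mnn: "m t \<ge> 0" if "t \<in> {0..ts}" for t
      using that below[of t] mts by (cases "t < ts") auto
    have nn: "\<forall>t\<in>{0..ts}. 0 \<le> e t \<and> 0 \<le> i t \<and> 0 \<le> j t"
      using mnn by (auto simp: m_def)
    have tsT: "ts \<le> T" using ts t1 by auto
    have ub1: "0 \<le> u t \<and> u t \<le> 1" if "t \<in> {0..ts}" for t
    proof -
      have "t \<in> {0..T}" using that tsT by auto
      then have "0 \<le> u t \<and> u t \<le> umax" using ub by blast
      then show ?thesis using um by linarith
    qed
    have "e ts = 0 \<or> i ts = 0 \<or> j ts = 0" using mts by (auto simp: m_def min_def split: if_splits)
    then show False
    proof (elim disjE)
      assume z: "e ts = 0"
      have "e0 = 0"
      proof (rule zero_from_eq[OF ts(1) tsT fei ce eqe z])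
        show "\<forall>t\<in>{0..ts}. 0 \<le> e t" using nn by auto
        show "0 \<le> g" using par by simp
        show "\<forall>t\<in>{0..ts}. - (g * e t) \<le> infl b1 b2 (u t) (s t) (i t) (j t) - g * e t"
        proof
          fix t assume t: "t \<in> {0..ts}"
          have "t \<in> {0..T}" using t tsT by auto
          then have sp: "s t > 0" using spos by blast
          have ij: "0 \<le> i t" "0 \<le> j t" using nn t by auto
          have "infl b1 b2 (u t) (s t) (i t) (j t) \<ge> 0"
            using ub1[OF t] par sp ij by (intro infl_nonneg) auto
          then show "- (g * e t) \<le> infl b1 b2 (u t) (s t) (i t) (j t) - g * e t" by simp
        qed
      qed
      then show False using init by simp
    next
      assume z: "i ts = 0"
      have "i0 = 0"
      proof (rule zero_from_eq[OF ts(1) tsT fii ci eqi z])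
        show "\<forall>t\<in>{0..ts}. 0 \<le> i t" using nn by auto
        show "0 \<le> r1" using par by simp
        show "\<forall>t\<in>{0..ts}. - (r1 * i t) \<le> c1 * g * e t - r1 * i t"
          using nn sig par by (auto intro!: mult_nonneg_nonneg)
      qed
      then show False using init by simp
    next
      assume z: "j ts = 0"
      have "j0 = 0"
      proof (rule zero_from_eq[OF ts(1) tsT fji cj eqj z])
        show "\<forall>t\<in>{0..ts}. 0 \<le> j t" using nn by auto
        show "0 \<le> r2" using par by simp
        show "\<forall>t\<in>{0..ts}. - (r2 * j t) \<le> c2 * g * e t - r2 * j t"
          using nn sig par by (auto intro!: mult_nonneg_nonneg)
      qed
      then show False using init by simp
    qed
  qed
  have it: "i t > 0" and jt: "j t > 0" using eijpos tT by auto
  have wt: "0 \<le> u t" "u t \<le> umax" using ub tT by auto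
  let ?A = "b1 * s t * i t * (p1 t - p2 t) + 0.5 * a3"
  let ?B = "s t * (2 * b1 * i t + b2 * j t) * (p1 t - p2 t)"
  have mx: "\<forall>v\<in>{0..umax}. ?B * v - ?A * v^2 \<le> ?B * u t - ?A * (u t)^2"
  proof
    fix v assume v: "v \<in> {0..umax}"
    have "Ham b1 b2 g r1 r2 c1 c2 a2 a3 (s t) (e t) (i t) (j t) (p1 t) (p2 t) (p3 t) (p4 t) v
        \<le> Ham b1 b2 g r1 r2 c1 c2 a2 a3 (s t) (e t) (i t) (j t) (p1 t) (p2 t) (p3 t) (p4 t) (u t)"
      using maxt v by auto
    then show "?B * v - ?A * v^2 \<le> ?B * u t - ?A * (u t)^2"
      by (subst (asm) (1 2) Ham_expand) simp
  qed
  show ?thesis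
    using final_alg[OF refl refl wt um(2) it jt par(1) par(2) wts(3) mx] by simp
qed

end
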